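(* Let $\alpha=3/4$. Every point $(x,y)\in[0,1]^2$ with $x+y=4/3$ satisfies $G_{3/4}(x,y)=(y,x)$, so each such point other than the fixed point $(2/3,2/3)$ is periodic with period $2$. Moreover, every point of $[0,1]^2$ other than $(0,0)$ is either periodic (with period $1$ or $2$), or eventually periodic, or its orbit is attracted to the line $x+y=4/3$, i.e. the distance from $G_{3/4}^n(x,y)$ to the line $\{x+y=4/3\}$ tends to $0$ as $n\to\infty$.
   Context: Let $\tau:[0,1]\to[0,1]$ be the symmetric tent map, $\tau(x)=2x$ for $0\le x<1/2$ and $\tau(x)=2-2x$ for $1/2\le x\le 1$. For $0<\alpha<1$ define $G_\alpha:[0,1]^2\to[0,1]^2$ by $G_\alpha(x,y)=(y,\tau(\alpha y+(1-\alpha)x))$. *)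

theory Defs
  imports "HOL-Analysis.Analysis"
begin

definition tent :: "real \<Rightarrow> real" where
  "tent x = (if x < 1/2 then 2 * x else 2 - 2 * x)"

definition G :: "real \<Rightarrow> real \<times> real \<Rightarrow> real \<times> real" where
  "G \<alpha> p = (snd p, tent (\<alpha> * snd p + (1 - \<alpha>) * fst p))"

definition unit_square :: "(real \<times> real) set" where
  "unit_square = {0..1} \<times> {0..1}"

definition diag_line :: "(real \<times> real) set" where
  "diag_line = {(x, y). x + y = 4/3}"

end

theory Submission
  imports Defs
begin

definition mu :: "real \<times> real \<Rightarrow> real" where "mu p = fst p + 2 * snd p - 2"
definition rr :: "real \<times> real \<Rightarrow> real" where "rr p = fst p + snd p - 4/3"

lemma G_U: "x + 3*y \<ge> 2 \<Longrightarrow> G (3/4) (x,y) = (y, 2 - (x + 3*y)/2)"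
  by (simp add: G_def tent_def algebra_simps)

lemma G_L: "x + 3*y < 2 \<Longrightarrow> G (3/4) (x,y) = (y, (x + 3*y)/2)"
  by (simp add: G_def tent_def algebra_simps)

lemma sq_iff: "(x,y) \<in> unit_square \<longleftrightarrow> 0 \<le> x \<and> x \<le> 1 \<and> 0 \<le> y \<and> y \<le> 1"
  by (auto simp: unit_square_def)

lemma muU: "x + 3*y \<ge> 2 \<Longrightarrow> mu (G (3/4) (x,y)) = 2 - x - 2*y"
  by (simp add: G_U mu_def algebra_simps)
lemma muL: "x + 3*y < 2 \<Longrightarrow> mu (G (3/4) (x,y)) = x + 4*y - 2"
  by (simp add: G_L mu_def algebra_simps)
lemma rU: "x + 3*y \<ge> 2 \<Longrightarrow> rr (G (3/4) (x,y)) = 2/3 - x/2 - y/2"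
  by (simp add: G_U rr_def algebra_simps)
lemma rL: "x + 3*y < 2 \<Longrightarrow> rr (G (3/4) (x,y)) = x/2 + 5*y/2 - 4/3"
  by (simp add: G_L rr_def field_simps)
lemma mu_xy: "mu (x,y) = x + 2*y - 2" by (simp add: mu_def)
lemma r_xy: "rr (x,y) = x + y - 4/3" by (simp add: rr_def)

lemma G_sq: assumes "p \<in> unit_square" shows "G (3/4) p \<in> unit_square"
proof -
  obtain x y where p: "p = (x,y)" by (cases p)
  have h: "0 \<le> x" "x \<le> 1" "0 \<le> y" "y \<le> 1" using assms by (auto simp: p sq_iff)
  show ?thesis
  proof (cases "x + 3*y \<ge> 2")
    case True thus ?thesis using h by (simp add: p G_U sq_iff)
  next
    case False thus ?thesis using h by (simp add: p G_L sq_iff)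
  qed
qed

lemma mu_dec: assumes "p \<in> unit_square" shows "\<bar>mu (G (3/4) p)\<bar> \<le> \<bar>mu p\<bar>"
proof -
  obtain x y where p: "p = (x,y)" by (cases p)
  have h: "0 \<le> x" "x \<le> 1" "0 \<le> y" "y \<le> 1" using assms by (auto simp: p sq_iff)
  show ?thesis
  proof (cases "x + 3*y \<ge> 2")
    case True thus ?thesis by (simp add: p muU mu_xy abs_minus_commute)
  next
    case False
    hence "\<bar>x + 2*y - 2\<bar> = 2 - x - 2*y" using h by simp
    moreover have "\<bar>x + 4*y - 2\<bar> \<le> 2 - x - 2*y" using h False by (simp add: abs_le_iff)
    ultimately show ?thesis using False by (simp add: p muL mu_xy)
  qed
qed

lemma r_step: assumes "p \<in> unit_square"
  shows "\<bar>rr (G (3/4) p)\<bar> \<le> \<bar>rr p\<bar>/2 + 5 * max 0 (\<bar>mu p\<bar> - 1/3)"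
proof -
  obtain x y where p: "p = (x,y)" by (cases p)
  have h: "0 \<le> x" "x \<le> 1" "0 \<le> y" "y \<le> 1" using assms by (auto simp: p sq_iff)
  have m: "0 \<le> max 0 (\<bar>mu p\<bar> - 1/3)" by simp
  show ?thesis
  proof (cases "x + 3*y \<ge> 2")
    case True
    have "\<bar>2/3 - x/2 - y/2\<bar> = \<bar>x + y - 4/3\<bar>/2" by (simp add: abs_if)
    hence "\<bar>rr (G (3/4) p)\<bar> = \<bar>rr p\<bar>/2" using True by (simp add: p rU r_xy)
    thus ?thesis using m by (smt (verit))
  next
    case False
    have a: "\<bar>x + y - 4/3\<bar> = 4/3 - x - y" using h False by simp
    have b: "\<bar>x + 2*y - 2\<bar> = 2 - x - 2*y" using h False by simp
    have c: "\<bar>x/2 + 5*y/2 - 4/3\<bar> \<le> 5 * (2 - x - 2*y - 1/3)" using h False by (simp add: abs_le_iff)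
    have d: "2 - x - 2*y - 1/3 \<le> max 0 (\<bar>mu p\<bar> - 1/3)" using b by (simp add: p mu_xy)
    have "\<bar>rr (G (3/4) p)\<bar> \<le> 5 * max 0 (\<bar>mu p\<bar> - 1/3)" using c d False by (simp add: p rL)
    thus ?thesis by simp
  qed
qed

lemma r_U: "x + 3*y \<ge> 2 \<Longrightarrow> rr (G (3/4) (x,y)) = - rr (x,y) / 2"
  by (simp add: rU r_xy)

lemma dom_D: assumes "p \<in> unit_square" shows "\<bar>mu p\<bar> - 1/3 \<le> 2 * \<bar>rr p\<bar>"
proof -
  obtain x y where p: "p = (x,y)" by (cases p)
  have h: "0 \<le> x" "x \<le> 1" "0 \<le> y" "y \<le> 1" using assms by (auto simp: p sq_iff)
  show ?thesis using h by (simp add: p mu_xy r_xy abs_if)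
qed

lemma L_eq: assumes "(x,y) \<in> unit_square" "x + 3*y < 2" "\<bar>mu (G (3/4) (x,y))\<bar> = \<bar>mu (x,y)\<bar>"
  shows "y = 0"
proof -
  have h: "0 \<le> x" "x \<le> 1" "0 \<le> y" "y \<le> 1" using assms by (auto simp: sq_iff)
  have "\<bar>x + 4*y - 2\<bar> = \<bar>x + 2*y - 2\<bar>" using assms(3) assms(2) by (simp add: muL mu_xy)
  thus ?thesis using h assms(2) by (simp add: abs_if split: if_splits)
qed

lemma mu_two: assumes "p \<in> unit_square" "\<bar>mu p\<bar> \<ge> 2" shows "p = (0,0)"
proof -
  obtain x y where p: "p = (x,y)" by (cases p)
  have h: "0 \<le> x" "x \<le> 1" "0 \<le> y" "y \<le> 1" using assms by (auto simp: p sq_iff)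
  show ?thesis using h assms(2) by (simp add: p mu_xy abs_if split: if_splits)
qed


lemma tent_eq: "tent x = 1 - \<bar>2*x - 1\<bar>" by (simp add: tent_def abs_if)

lemma G_cont: "continuous_on UNIV (G (3/4))"
proof -
  have "G (3/4) = (\<lambda>p. (snd p, 1 - \<bar>2*(3/4 * snd p + (1 - 3/4) * fst p) - 1\<bar>))"
    by (intro ext) (simp add: G_def tent_eq)
  moreover have "continuous_on UNIV (\<lambda>p::real\<times>real. (snd p, 1 - \<bar>2*(3/4 * snd p + (1 - 3/4) * fst p) - 1\<bar>))"
    by (intro continuous_intros)
  ultimately show ?thesis by simp
qed

lemma Gn_cont: "continuous_on UNIV (G (3/4) ^^ n)"
proof (induction n)
  case 0 thus ?case by (simp add: continuous_on_id)
  case (Suc n)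
  have "G (3/4) ^^ Suc n = G (3/4) \<circ> (G (3/4) ^^ n)" by simp
  thus ?case using continuous_on_compose[OF Suc.IH continuous_on_subset[OF G_cont subset_UNIV]] by simp
qed

lemma Gn_sq: "q \<in> unit_square \<Longrightarrow> (G (3/4) ^^ n) q \<in> unit_square"
  by (induction n) (auto intro: G_sq)

lemma half_lim:
  fixes a b :: "nat \<Rightarrow> real"
  assumes a0: "\<And>n. 0 \<le> a n" and step: "\<And>n. a (Suc n) \<le> a n / 2 + b n" and b: "b \<longlonglongrightarrow> 0"
  shows "a \<longlonglongrightarrow> 0"
proof (rule metric_LIMSEQ_I)
  fix e :: real assume e: "0 < e"
  from LIMSEQ_D[OF b, of "e/4"] e obtain N where N: "\<And>n. n \<ge> N \<Longrightarrow> \<bar>b n\<bar> < e/4" by auto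
  have bound: "a (N + k) \<le> a N / 2^k + e/2" for k
  proof (induction k)
    case 0 thus ?case using e by simp
  next
    case (Suc k)
    have aux: "\<And>A B t. (A::real) \<le> t + e/2 \<Longrightarrow> B < e/4 \<Longrightarrow> A/2 + B \<le> (t+e/2)/2 + e/4"
      by (simp add: field_simps)
    have bk: "b (N+k) < e/4" using N[of "N+k", OF le_add1] by (simp add: abs_less_iff)
    have "a (N + Suc k) \<le> a (N + k) / 2 + b (N + k)" using step[of "N+k"] by simp
    also have "\<dots> \<le> (a N / 2^k + e/2) / 2 + e/4" by (rule aux[OF Suc.IH bk])
    also have "\<dots> = a N / 2^Suc k + e/2" by (simp add: field_simps)
    finally show ?case .
  qed
  have pos: "0 < e / (2 * (a N + 1))" using e a0[of N] by simp
  obtain K where K: "(1/2::real)^K < e / (2 * (a N + 1))"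
    using real_arch_pow_inv[OF pos, of "1/2"] by auto
  have K2: "a N / 2^K < e/2"
  proof -
    have eq: "(1/2::real)^K = 1 / 2^K" by (simp add: power_one_over)
    have "a N / 2^K \<le> (a N + 1) / 2^K" by (intro divide_right_mono) auto
    also have "\<dots> = (a N + 1) * (1/2)^K" by (simp add: eq)
    also have "\<dots> < (a N + 1) * (e / (2 * (a N + 1)))" using K a0[of N] by (intro mult_strict_left_mono) auto
    also have "\<dots> = e/2"
    proof -
      have "a N + 1 \<noteq> 0" using a0[of N] by linarith
      thus ?thesis by (simp add: field_simps)
    qed
    finally show ?thesis .
  qed
  show "\<exists>no. \<forall>n\<ge>no. dist (a n) 0 < e"
  proof (intro exI allI impI)
    fix n assume n: "n \<ge> N + K"
    define k where "k = n - N"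
    have k: "n = N + k" "k \<ge> K" using n by (auto simp: k_def)
    have "a N / 2^k \<le> a N / 2^K" using a0[of N] k(2) by (intro divide_left_mono power_increasing) auto
    hence "a (N + k) < e" using bound[of k] K2 by linarith
    hence "a n < e" using k(1) by simp
    thus "dist (a n) 0 < e" using a0[of n] by simp
  qed
qed

lemma funpow_apply_add: "(f ^^ j) ((f ^^ n) x) = (f ^^ (j + n)) x"
  by (simp add: funpow_add)

lemma conv:
  assumes p: "p \<in> unit_square" "p \<noteq> (0,0)"
  shows "(\<lambda>n. rr ((G (3/4) ^^ n) p)) \<longlonglongrightarrow> 0"
proof -
  define P where "P n = (G (3/4) ^^ n) p" for n
  have PS: "P (Suc n) = G (3/4) (P n)" for n by (simp add: P_def)
  have Psq: "P n \<in> unit_square" for n unfolding P_def using Gn_sq[OF p(1)] .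
  define m where "m n = \<bar>mu (P n)\<bar>" for n
  have dec: "decseq m" by (rule decseq_SucI) (simp add: m_def PS mu_dec Psq)
  obtain M where M: "m \<longlonglongrightarrow> M" "\<forall>i. M \<le> m i"
    using decseq_convergent[OF dec, of 0] m_def by auto
  show ?thesis
  proof (cases "M \<le> 1/3")
    case True
    have "(\<lambda>n. \<bar>rr (P n)\<bar>) \<longlonglongrightarrow> 0"
    proof (rule half_lim)
      show "0 \<le> \<bar>rr (P n)\<bar>" for n by simp
      show "\<bar>rr (P (Suc n))\<bar> \<le> \<bar>rr (P n)\<bar>/2 + 5 * max 0 (m n - 1/3)" for n
        using r_step[OF Psq[of n]] by (simp add: PS m_def)
      have "(\<lambda>n. 5 * max 0 (m n - 1/3)) \<longlonglongrightarrow> 5 * max 0 (M - 1/3)"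
        by (intro tendsto_intros M(1))
      moreover have "5 * max 0 (M - 1/3) = 0" using True by simp
      ultimately show "(\<lambda>n. 5 * max 0 (m n - 1/3)) \<longlonglongrightarrow> 0" by simp
    qed
    thus ?thesis unfolding P_def tendsto_rabs_zero_iff .
  next
    case False
    have "compact unit_square" unfolding unit_square_def by (intro compact_Times compact_Icc)
    hence sc: "seq_compact unit_square" by (rule compact_imp_seq_compact)
    obtain q \<sigma> where q: "q \<in> unit_square" "strict_mono \<sigma>" "(P \<circ> \<sigma>) \<longlonglongrightarrow> q"
      using seq_compactE[OF sc, of P] Psq by blast
    have Q: "\<bar>mu ((G (3/4) ^^ j) q)\<bar> = M" for j
    proof -
      have "(\<lambda>k. (G (3/4) ^^ j) (P (\<sigma> k))) \<longlonglongrightarrow> (G (3/4) ^^ j) q"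
        by (rule continuous_on_tendsto_compose[OF Gn_cont]) (use q(3) in \<open>auto simp: o_def\<close>)
      hence A: "(\<lambda>k. \<bar>mu ((G (3/4) ^^ j) (P (\<sigma> k)))\<bar>) \<longlonglongrightarrow> \<bar>mu ((G (3/4) ^^ j) q)\<bar>"
        unfolding mu_def by (intro tendsto_intros)
      have eq: "(\<lambda>k. \<bar>mu ((G (3/4) ^^ j) (P (\<sigma> k)))\<bar>) = m \<circ> (\<lambda>k. j + \<sigma> k)"
        by (rule ext) (simp add: P_def m_def funpow_apply_add)
      have sm: "strict_mono (\<lambda>k. j + \<sigma> k)" using q(2) by (simp add: strict_mono_def)
      have "(\<lambda>k. \<bar>mu ((G (3/4) ^^ j) (P (\<sigma> k)))\<bar>) \<longlonglongrightarrow> M"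
        unfolding eq by (rule LIMSEQ_subseq_LIMSEQ[OF M(1) sm])
      thus ?thesis using A LIMSEQ_unique by blast
    qed
    define e where "e = M - 1/3"
    have e: "e > 0" using False e_def by simp
    have Qsq: "(G (3/4) ^^ j) q \<in> unit_square" for j using Gn_sq[OF q(1)] .
    have rb: "e/2 \<le> \<bar>rr ((G (3/4) ^^ j) q)\<bar>" for j
      using dom_D[OF Qsq[of j]] Q[of j] e_def by simp
    have QS: "(G (3/4) ^^ Suc j) q = G (3/4) ((G (3/4) ^^ j) q)" for j by simp
    show ?thesis
    proof (cases "\<forall>j. fst ((G (3/4) ^^ j) q) + 3 * snd ((G (3/4) ^^ j) q) \<ge> 2")
      case True
      have rq: "rr ((G (3/4) ^^ j) q) = (-1/2)^j * rr q" for j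
      proof (induction j)
        case 0 thus ?case by simp
      next
        case (Suc j)
        obtain x y where xy: "(G (3/4) ^^ j) q = (x,y)" by (cases "(G (3/4) ^^ j) q")
        have "x + 3*y \<ge> 2" using True[rule_format, of j] xy by simp
        hence "rr ((G (3/4) ^^ Suc j) q) = - rr ((G (3/4) ^^ j) q) / 2" using xy by (simp add: r_U)
        thus ?case using Suc.IH by simp
      qed
      obtain K where K: "(1/2::real)^K < e / (2 * (\<bar>rr q\<bar> + 1))"
        using real_arch_pow_inv[of "e / (2 * (\<bar>rr q\<bar> + 1))" "1/2"] e by auto
      have "\<bar>rr ((G (3/4) ^^ K) q)\<bar> = \<bar>rr q\<bar> * (1/2)^K" by (simp add: rq abs_mult power_abs)
      also have "\<dots> \<le> (\<bar>rr q\<bar> + 1) * (1/2)^K" by (simp add: mult_right_mono)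
      also have "\<dots> < (\<bar>rr q\<bar> + 1) * (e / (2 * (\<bar>rr q\<bar> + 1)))"
        using K by (intro mult_strict_left_mono) auto
      also have "\<dots> = e/2" by (simp add: field_simps)
      finally show ?thesis using rb[of K] by simp
    next
      case False
      then obtain j where j: "fst ((G (3/4) ^^ j) q) + 3 * snd ((G (3/4) ^^ j) q) < 2" by (meson not_le)
      obtain a b where ab: "(G (3/4) ^^ j) q = (a,b)" by (cases "(G (3/4) ^^ j) q")
      have absq: "(a,b) \<in> unit_square" using Qsq[of j] ab by simp
      have L1: "a + 3*b < 2" using j ab by simp
      have "\<bar>mu (G (3/4) (a,b))\<bar> = \<bar>mu (a,b)\<bar>" using Q[of "Suc j"] Q[of j] ab QS[of j] by simp
      hence b0: "b = 0" using L_eq[OF absq L1] by simp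
      have a01: "0 \<le> a" "a \<le> 1" using absq by (auto simp: sq_iff)
      have G1: "(G (3/4) ^^ Suc j) q = (0, a/2)" using QS[of j] ab b0 G_L[of a 0] L1 by simp
      have G2: "(G (3/4) ^^ Suc (Suc j)) q = G (3/4) (0, a/2)" using QS[of "Suc j"] G1 by simp
      have sq2: "(0, a/2) \<in> unit_square" using a01 by (simp add: sq_iff)
      have L2: "0 + 3*(a/2) < 2" using a01 by simp
      have "\<bar>mu (G (3/4) (0, a/2))\<bar> = \<bar>mu (0, a/2)\<bar>" using Q[of "Suc (Suc j)"] Q[of "Suc j"] G1 G2 by simp
      hence "a/2 = 0" using L_eq[OF sq2 L2] by simp
      hence "(G (3/4) ^^ j) q = (0,0)" using ab b0 by simp
      hence "M = 2" using Q[of j] by (simp add: mu_def)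
      moreover have "M \<le> m 0" using M(2) by simp
      ultimately have "\<bar>mu p\<bar> \<ge> 2" by (simp add: m_def P_def)
      thus ?thesis using mu_two[OF p(1)] p(2) by simp
    qed
  qed
qed

lemma part1:
  fixes x y :: real
  assumes "x \<in> {0..1}" "y \<in> {0..1}" "x + y = 4/3"
  shows "G (3/4) (x, y) = (y, x)"
proof -
  have "x + 3*y \<ge> 2" using assms by auto
  hence "G (3/4) (x,y) = (y, 2 - (x + 3*y)/2)" by (rule G_U)
  also have "2 - (x + 3*y)/2 = x" using assms(3) by (simp add: field_simps)
  finally show ?thesis .
qed

theorem theorem5:
  shows "(\<forall>x y. x \<in> {0..1} \<and> y \<in> {0..1} \<and> x + y = 4/3 \<longrightarrow>
            G (3/4) (x, y) = (y, x) \<and>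
            ((x, y) \<noteq> (2/3, 2/3) \<longrightarrow>
               (G (3/4) ^^ 2) (x, y) = (x, y) \<and> G (3/4) (x, y) \<noteq> (x, y)))
       \<and> (\<forall>p \<in> unit_square. p \<noteq> (0, 0) \<longrightarrow>
            (G (3/4) p = p)
          \<or> ((G (3/4) ^^ 2) p = p \<and> G (3/4) p \<noteq> p)
          \<or> (\<exists>m k. k > 0 \<and> (G (3/4) ^^ (m + k)) p = (G (3/4) ^^ m) p)
          \<or> ((\<lambda>n. infdist ((G (3/4) ^^ n) p) diag_line) \<longlonglongrightarrow> 0))"
proof (intro conjI allI impI ballI)
  fix x y :: real
  assume h: "x \<in> {0..1} \<and> y \<in> {0..1} \<and> x + y = 4/3"
  show "G (3/4) (x, y) = (y, x)" using part1 h by blast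
  assume ne: "(x, y) \<noteq> (2/3, 2/3)"
  have g1: "G (3/4) (x, y) = (y, x)" using part1 h by blast
  have g2: "G (3/4) (y, x) = (x, y)" using part1[of y x] h by auto
  show "(G (3/4) ^^ 2) (x, y) = (x, y)" using g1 g2 by (simp add: numeral_2_eq_2)
  show "G (3/4) (x, y) \<noteq> (x, y)" using g1 ne h by auto
next
  fix p :: "real \<times> real"
  assume p: "p \<in> unit_square" "p \<noteq> (0,0)"
  define P where "P n = (G (3/4) ^^ n) p" for n
  have r0: "(\<lambda>n. \<bar>rr (P n)\<bar>) \<longlonglongrightarrow> 0" using conv[OF p] unfolding P_def tendsto_rabs_zero_iff .
  have "(\<lambda>n. infdist (P n) diag_line) \<longlonglongrightarrow> 0"
  proof (rule Lim_null_comparison[OF _ r0], rule always_eventually, rule allI)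
    fix n
    obtain x y where xy: "P n = (x,y)" by (cases "P n")
    have mem: "(x - rr (x,y), y) \<in> diag_line" by (simp add: diag_line_def rr_def)
    have "infdist (P n) diag_line \<le> dist (x,y) (x - rr (x,y), y)" using infdist_le[OF mem] xy by simp
    also have "\<dots> = \<bar>rr (P n)\<bar>" by (simp add: dist_Pair_Pair dist_real_def xy)
    moreover have "norm (infdist (P n) diag_line) = infdist (P n) diag_line" by (simp add: infdist_nonneg)
    ultimately show "norm (infdist (P n) diag_line) \<le> \<bar>rr (P n)\<bar>" by simp
  qed
  thus "(G (3/4) p = p)
          \<or> ((G (3/4) ^^ 2) p = p \<and> G (3/4) p \<noteq> p)
          \<or> (\<exists>m k. k > 0 \<and> (G (3/4) ^^ (m + k)) p = (G (3/4) ^^ m) p)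
          \<or> ((\<lambda>n. infdist ((G (3/4) ^^ n) p) diag_line) \<longlonglongrightarrow> 0)" unfolding P_def by blast
qed

end
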